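(* Let $S$, $\psi_1,\psi_2,\psi_3$, $\beta$ and $\tau$ be as in the context. Let $n\ge 1$ and $j_0,\dots,j_{n-1}\in\{1,2,3\}$, and write $\psi_{j_0\dots j_{n-1}}=\psi_{j_0}\circ\cdots\circ\psi_{j_{n-1}}$, an invertible affine map of $\mathbb R^2$ with constant derivative $D\psi_{j_0\dots j_{n-1}}$. Then the push-forward of $\tau$ satisfies $$(\psi_{j_0\dots j_{n-1}})_\sharp\tau=\beta^n\,(D\psi_{j_0\dots j_{n-1}})^{-1}\cdot\tau|_{\psi_{j_0\dots j_{n-1}}(S)}\cdot{}^t(D\psi_{j_0\dots j_{n-1}})^{-1},$$ where $\tau|_{\psi_{j_0\dots j_{n-1}}(S)}$ is the restriction of $\tau$ to the set $\psi_{j_0\dots j_{n-1}}(S)$ and ${}^tA$ denotes the transpose of $A$.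
   Context: Let $T_1=\begin{pmatrix}3/5&0\\0&1/5\end{pmatrix}$, $T_2=\begin{pmatrix}3/10&\sqrt3/10\\ \sqrt3/10&1/2\end{pmatrix}$, $T_3=\begin{pmatrix}3/10&-\sqrt3/10\\ -\sqrt3/10&1/2\end{pmatrix}$, $\bar A=(0,0)$, $\bar B=(1,1/\sqrt3)$, $\bar C=(1,-1/\sqrt3)$, and $\psi_1(x)=\bar A+T_1(x-\bar A)$, $\psi_2(x)=\bar B+T_2(x-\bar B)$, $\psi_3(x)=\bar C+T_3(x-\bar C)$. The harmonic Sierpinski gasket $S\subset\mathbb R^2$ is the unique nonempty compact set with $S=\bigcup_{i=1}^3\psi_i(S)$. For $w=(w_0w_1\dots)\in\Sigma=\{1,2,3\}^{\mathbb N}$ write $\psi_{w_0\dots w_l}=\psi_{w_0}\circ\cdots\circ\psi_{w_l}$ and call $[w_0\dots w_l]=\psi_{w_0\dots w_l}(S)$ a cell; cells generate the Borel $\sigma$-algebra of $S$. Let $M^2$ be the space of real symmetric $2\times2$ matrices with the Hilbert–Schmidt inner product $(A,B)_{HS}=\mathrm{tr}(AB)$. Let $\mathcal L$ act on continuous fields $A\in C(S,M^2)$ by $(\mathcal LA)(x)=\sum_{i=1}^3{}^tD\psi_i\,A_{\psi_i(x)}\,D\psi_i$. It is known that $\mathcal L$ has a simple positive eigenvalue $\beta>0$ whose eigenspace is spanned by the constant field $Id$, and that there is a unique $M^2$-valued Borel measure $\tau$ on $S$ which is semipositive definite ($\tau(E)$ is positive semidefinite for every Borel $E$), normalized by $\mathrm{tr}\,\tau(S)=1$,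 and satisfies $\mathcal L^*\tau=\beta\tau$ (i.e. $\int_S(\mathcal LA,d\tau)_{HS}=\beta\int_S(A,d\tau)_{HS}$ for all $A\in C(S,M^2)$). Moreover $\tau(S)$ is a positive multiple of the identity and $\tau$ has the Gibbs property $\tau([x_0\dots x_{l-1}])=\beta^{-l}\,D\psi_{x_0\dots x_{l-1}}\,\tau(S)\,{}^tD\psi_{x_0\dots x_{l-1}}$ for every word $x_0\dots x_{l-1}$. *)

theory Defs
  imports "HOL-Analysis.Analysis"
begin

type_synonym pt = "real^2"
type_synonym mat2 = "real^2^2"

definition Tm :: "nat \<Rightarrow> mat2" where
  "Tm i = (if i = 1 then vector [vector [3/5, 0], vector [0, 1/5]]
           else if i = 2 then vector [vector [3/10, sqrt 3/10], vector [sqrt 3/10, 1/2]]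
           else vector [vector [3/10, - sqrt 3/10], vector [- sqrt 3/10, 1/2]])"

definition vtx :: "nat \<Rightarrow> pt" where
  "vtx i = (if i = 1 then vector [0, 0]
            else if i = 2 then vector [1, 1 / sqrt 3]
            else vector [1, - 1 / sqrt 3])"

definition psi :: "nat \<Rightarrow> pt \<Rightarrow> pt" where
  "psi i x = vtx i + Tm i *v (x - vtx i)"

definition psiw :: "nat list \<Rightarrow> pt \<Rightarrow> pt" where
  "psiw js = foldr (\<lambda>i f. psi i \<circ> f) js id"

definition Dpsiw :: "nat list \<Rightarrow> mat2" where
  "Dpsiw js = foldr (\<lambda>i M. Tm i ** M) js (mat 1)"

definition Lop :: "(pt \<Rightarrow> mat2) \<Rightarrow> pt \<Rightarrow> mat2" where
  "Lop A x = (\<Sum>i\<in>{1,2,3::nat}. transpose (Tm i) ** A (psi i x) ** Tm i)"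

definition symmetric_mat :: "mat2 \<Rightarrow> bool" where
  "symmetric_mat M \<longleftrightarrow> transpose M = M"

abbreviation borelS :: "pt set \<Rightarrow> pt set set" where
  "borelS S \<equiv> sets (restrict_space borel S)"

definition matrix_measure :: "pt set \<Rightarrow> (pt set \<Rightarrow> mat2) \<Rightarrow> bool" where
  "matrix_measure S \<tau> \<longleftrightarrow>
     (\<forall>E\<in>borelS S. symmetric_mat (\<tau> E)) \<and>
     (\<forall>A::nat \<Rightarrow> pt set. range A \<subseteq> borelS S \<longrightarrow> disjoint_family A \<longrightarrow>
        (\<lambda>n. \<tau> (A n)) sums \<tau> (\<Union>n. A n))"

definition semipos_measure :: "pt set \<Rightarrow> (pt set \<Rightarrow> mat2) \<Rightarrow> bool" where
  "semipos_measure S \<tau> \<longleftrightarrow> (\<forall>E\<in>borelS S. \<forall>v. 0 \<le> v \<bullet> (\<tau> E *v v))"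

definition qmeas :: "pt set \<Rightarrow> (pt set \<Rightarrow> mat2) \<Rightarrow> pt \<Rightarrow> pt measure" where
  "qmeas S \<tau> v = measure_of S (borelS S) (\<lambda>E. ennreal (v \<bullet> (\<tau> E *v v)))"

text \<open>Integral of (A, d tau)_HS = sum_{k,l} int A_kl d tau_lk, where the signed entry
  measures tau_lk are obtained by polarization:
  tau_lk = 1/4 (q_{e_l+e_k} - q_{e_l-e_k}), q_v(E) = v . tau(E) v.\<close>
definition HSint :: "pt set \<Rightarrow> (pt set \<Rightarrow> mat2) \<Rightarrow> (pt \<Rightarrow> mat2) \<Rightarrow> real" where
  "HSint S \<tau> A = (\<Sum>k\<in>UNIV. \<Sum>l\<in>UNIV.
      (1/4) * ((\<integral>x. A x $ k $ l \<partial>(qmeas S \<tau> (axis l 1 + axis k 1)))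
             - (\<integral>x. A x $ k $ l \<partial>(qmeas S \<tau> (axis l 1 - axis k 1)))))"

end

theory Submission
  imports Defs "HOL-Library.Sublist"
begin


lemma Tm_cases: "Tm i = Tm 1 \<or> Tm i = Tm 2 \<or> Tm i = Tm 3"
  unfolding Tm_def by auto

lemma Tm_sym: "transpose (Tm i) = Tm i"
  unfolding Tm_def transpose_def by (auto simp: vec_eq_iff forall_2 vector_2)

lemma Tm_det: "det (Tm i) \<noteq> 0"
  unfolding Tm_def by (auto simp: det_2 vector_2)

lemma Tm_inv: "invertible (Tm i)"
  using Tm_det invertible_det_nz by blast

lemma norm2_vec2: "(norm (z::real^2))^2 = (z$1)^2 + (z$2)^2"
  unfolding power2_norm_eq_inner inner_vec_def by (simp add: sum_2 power2_eq_square)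

lemma Tm_norm: "norm (Tm i *v z) \<le> 3/5 * norm z"
proof -
  have s3: "sqrt 3 ^ 2 = 3" by simp
  define a where "a = z$1"
  define b where "b = z$2"
  have c1: "(Tm 1 *v z)$1 = 3/5*a" "(Tm 1 *v z)$2 = 1/5*b"
    "(Tm 2 *v z)$1 = 3/10*a + sqrt 3/10*b" "(Tm 2 *v z)$2 = sqrt 3/10*a + 1/2*b"
    "(Tm 3 *v z)$1 = 3/10*a - sqrt 3/10*b" "(Tm 3 *v z)$2 = - sqrt 3/10*a + 1/2*b"
    unfolding Tm_def a_def b_def by (auto simp: matrix_vector_mult_def sum_2)
  have e1: "9/25*(a^2+b^2) - ((3/5*a)^2 + (1/5*b)^2) = 8/25*b^2"
    by (simp add: power2_eq_square algebra_simps)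
  have e2: "9/25*(a^2+b^2) - ((3/10*a + sqrt 3/10*b)^2 + (sqrt 3/10*a + 1/2*b)^2) = 2/25*(sqrt 3*a - b)^2"
    by (simp add: power2_eq_square algebra_simps)
  have e3: "9/25*(a^2+b^2) - ((3/10*a - sqrt 3/10*b)^2 + (- sqrt 3/10*a + 1/2*b)^2) = 2/25*(sqrt 3*a + b)^2"
    by (simp add: power2_eq_square algebra_simps)
  have p: "b^2 \<ge> 0" "(sqrt 3*a - b)^2 \<ge> 0" "(sqrt 3*a + b)^2 \<ge> 0" by simp_all
  have "(Tm i *v z)$1^2 + (Tm i *v z)$2^2 \<le> 9/25*(a^2+b^2)"
    using Tm_cases[of i] 
  proof (elim disjE)
    assume h: "Tm i = Tm 1" show ?thesis unfolding h c1 using e1 p by linarith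
  next
    assume h: "Tm i = Tm 2" show ?thesis unfolding h c1 using e2 p by linarith
  next
    assume h: "Tm i = Tm 3" show ?thesis unfolding h c1 using e3 p by linarith
  qed
  then have "(norm (Tm i *v z))^2 \<le> (3/5 * norm z)^2"
    unfolding power_mult_distrib norm2_vec2 a_def b_def by (simp add: power2_eq_square algebra_simps)
  then show ?thesis by (rule power2_le_imp_le) simp
qed


lemma psiw_Nil[simp]: "psiw [] = id" by (simp add: psiw_def)
lemma psiw_Cons[simp]: "psiw (i#u) = psi i \<circ> psiw u" by (simp add: psiw_def)
lemma Dpsiw_Nil[simp]: "Dpsiw [] = mat 1" by (simp add: Dpsiw_def)
lemma Dpsiw_Cons[simp]: "Dpsiw (i#u) = Tm i ** Dpsiw u" by (simp add: Dpsiw_def)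

lemma psiw_append: "psiw (u@w) = psiw u \<circ> psiw w"
  by (induction u) auto

lemma Dpsiw_append: "Dpsiw (u@w) = Dpsiw u ** Dpsiw w"
  by (induction u) (auto simp: matrix_mul_assoc)

lemma psi_diff: "psi i x - psi i y = Tm i *v (x - y)"
  unfolding psi_def by (simp add: matrix_vector_mult_diff_distrib)

lemma psiw_diff: "psiw u x - psiw u y = Dpsiw u *v (x - y)"
  by (induction u arbitrary: x y) (auto simp: psi_diff matrix_vector_mul_assoc)

lemma psiw_affine: "psiw u x = psiw u 0 + Dpsiw u *v x"
  using psiw_diff[of u x 0] by (simp add: algebra_simps)

lemma Dpsiw_inv: "invertible (Dpsiw u)"
proof (induction u)
  case Nil then show ?case by (simp add: invertible_def)
next
  case (Cons i u) then show ?case using Tm_inv invertible_mult by auto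
qed

lemma Dpsiw_norm: "norm (Dpsiw u *v z) \<le> (3/5)^length u * norm z"
proof (induction u arbitrary: z)
  case Nil then show ?case by simp
next
  case (Cons i u)
  have "norm (Dpsiw (i#u) *v z) = norm (Tm i *v (Dpsiw u *v z))"
    by (simp add: matrix_vector_mul_assoc)
  also have "\<dots> \<le> 3/5 * norm (Dpsiw u *v z)" by (rule Tm_norm)
  also have "\<dots> \<le> 3/5 * ((3/5)^length u * norm z)" using Cons by simp
  finally show ?case by simp
qed

lemma matrix_inv_both:
  assumes "invertible (A::real^'n^'n)"
  shows "A ** matrix_inv A = mat 1" "matrix_inv A ** A = mat 1"
proof -
  have "\<exists>A'. A ** A' = mat 1 \<and> A' ** A = mat 1" using assms unfolding invertible_def by blast
  then have "A ** matrix_inv A = mat 1 \<and> matrix_inv A ** A = mat 1"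
    unfolding matrix_inv_def by (rule someI_ex)
  then show "A ** matrix_inv A = mat 1" "matrix_inv A ** A = mat 1" by auto
qed

lemma psiw_inj: "inj (psiw u)"
proof (rule injI)
  fix x y assume "psiw u x = psiw u y"
  then have "Dpsiw u *v (x - y) = 0" using psiw_diff[of u x y] by simp
  then have "matrix_inv (Dpsiw u) *v (Dpsiw u *v (x - y)) = 0" by simp
  then show "x = y" using Dpsiw_inv[of u]
    by (simp add: matrix_vector_mul_assoc matrix_inv_both(2))
qed

lemma psiw_cont: "continuous_on A (psiw u)"
  by (subst psiw_affine[abs_def]) (intro continuous_intros)

definition ginv :: "nat list \<Rightarrow> pt \<Rightarrow> pt" where
  "ginv u y = matrix_inv (Dpsiw u) *v (y - psiw u 0)"

lemma ginv_psiw: "ginv u (psiw u x) = x"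
  unfolding ginv_def using Dpsiw_inv[of u]
  by (subst psiw_affine) (simp add: matrix_vector_mul_assoc matrix_inv_both(2))

lemma psiw_ginv: "psiw u (ginv u y) = y"
  unfolding ginv_def using Dpsiw_inv[of u]
  by (subst psiw_affine) (simp add: matrix_vector_mul_assoc matrix_inv_both(1))

lemma ginv_meas: "ginv u \<in> borel_measurable borel"
  unfolding ginv_def by (intro borel_measurable_continuous_onI bounded_linear.continuous_on[OF matrix_vector_mul_bounded_linear] continuous_intros)

lemma psiw_image_vimage: "psiw u ` B = ginv u -` B"
  by (auto simp: ginv_psiw) (metis image_eqI psiw_ginv)



lemma matrix_add_rdistrib': "((A::real^2^2) + B) ** C = A ** C + B ** C"
  by (vector matrix_matrix_mult_def sum.distrib[symmetric] field_simps)

lemma lin_sand: "linear (\<lambda>M::real^2^2. (A::real^2^2) ** M ** (B::real^2^2))"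
  by (rule linearI) (simp_all add: matrix_add_ldistrib matrix_add_rdistrib' matrix_scalar_ac scalar_matrix_assoc)

lemma lin_qf: "linear (\<lambda>M::real^2^2. v \<bullet> (M *v v))"
  by (rule linearI) (simp_all add: matrix_vector_mult_add_rdistrib inner_add_right scaleR_matrix_vector_assoc[symmetric])

lemma blin_sand: "bounded_linear (\<lambda>M::real^2^2. (A::real^2^2) ** M ** (B::real^2^2))"
  using lin_sand linear_conv_bounded_linear by blast

lemma blin_qf: "bounded_linear (\<lambda>M::real^2^2. v \<bullet> (M *v v))"
  using lin_qf linear_conv_bounded_linear by blast

definition W :: "nat \<Rightarrow> nat list set" where
  "W l = {u. set u \<subseteq> {1,2,3} \<and> length u = l}"

lemma W_finite: "finite (W l)"
  unfolding W_def by (rule finite_lists_length_eq) simp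

lemma W_Suc: "W (Suc l) = (\<lambda>(i,u). i#u) ` ({1,2,3} \<times> W l)"
  unfolding W_def by (auto simp: length_Suc_conv image_iff)

lemma sum_W_Suc: "(\<Sum>u\<in>W (Suc l). f u) = (\<Sum>i\<in>{1,2,3}. \<Sum>u\<in>W l. f (i#u))"
proof -
  have "inj_on (\<lambda>(i,u). i#u) ({1,2,3::nat} \<times> W l)" by (auto simp: inj_on_def)
  then have "(\<Sum>u\<in>W (Suc l). f u) = (\<Sum>p\<in>{1,2,3} \<times> W l. f (fst p # snd p))"
    unfolding W_Suc by (subst sum.reindex) (auto simp: case_prod_beta)
  also have "\<dots> = (\<Sum>i\<in>{1,2,3}. \<Sum>u\<in>W l. f (i#u))"
    using sum.cartesian_product[of "\<lambda>i u. f (i#u)" "W l" "{1,2,3::nat}"] by (simp add: case_prod_beta)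
  finally show ?thesis .
qed

lemma DD_sum:
  assumes TT: "(\<Sum>i\<in>{1,2,3::nat}. Tm i ** Tm i) = \<beta> *\<^sub>R mat 1"
  shows "(\<Sum>u\<in>W l. Dpsiw u ** transpose (Dpsiw u)) = \<beta>^l *\<^sub>R mat 1"
proof (induction l)
  case 0
  have "W 0 = {[]}" unfolding W_def by auto
  then show ?case by simp
next
  case (Suc l)
  have "(\<Sum>u\<in>W (Suc l). Dpsiw u ** transpose (Dpsiw u))
      = (\<Sum>i\<in>{1,2,3}. \<Sum>u\<in>W l. Tm i ** (Dpsiw u ** transpose (Dpsiw u)) ** Tm i)"
    unfolding sum_W_Suc by (simp add: matrix_transpose_mul Tm_sym matrix_mul_assoc)
  also have "\<dots> = (\<Sum>i\<in>{1,2,3}. Tm i ** (\<Sum>u\<in>W l. Dpsiw u ** transpose (Dpsiw u)) ** Tm i)"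
    by (simp add: linear_sum[OF lin_sand, symmetric])
  also have "\<dots> = (\<Sum>i\<in>{1,2,3}. \<beta>^l *\<^sub>R (Tm i ** Tm i))"
    unfolding Suc by (simp add: matrix_scalar_ac scalar_matrix_assoc)
  also have "\<dots> = \<beta>^l *\<^sub>R (\<Sum>i\<in>{1,2,3}. Tm i ** Tm i)"
    by (simp add: scaleR_add_right)
  finally show ?case unfolding TT by simp
qed


lemma borelS_sa: "sigma_algebra S (borelS S)"
proof -
  have "sigma_algebra (space (restrict_space borel S)) (sets (restrict_space borel S))"
    by (rule sets.sigma_algebra_axioms)
  then show ?thesis by (simp add: space_restrict_space)
qed

lemma mm_empty: "matrix_measure S \<sigma> \<Longrightarrow> \<sigma> {} = 0"
proof -
  assume mm: "matrix_measure S \<sigma>"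
  have r: "range (\<lambda>_::nat. {}::pt set) \<subseteq> borelS S" by auto
  have d: "disjoint_family (\<lambda>_::nat. {}::pt set)" by (simp add: disjoint_family_on_def)
  have "(\<lambda>n. \<sigma> ((\<lambda>_::nat. {}::pt set) n)) sums \<sigma> (\<Union>n. (\<lambda>_::nat. {}::pt set) n)"
    using mm r d unfolding matrix_measure_def by blast
  then have "(\<lambda>n. \<sigma> {}) sums \<sigma> {}" by simp
  then have "(\<lambda>n. \<sigma> {}) \<longlonglongrightarrow> 0" using summable_LIMSEQ_zero sums_summable by blast
  then show ?thesis using LIMSEQ_const_iff by blast
qed

lemma qmeas_sets: "sets (qmeas S \<sigma> v) = borelS S"
  unfolding qmeas_def using sigma_algebra.sets_measure_of_eq[OF borelS_sa] by blast

lemma qmeas_space: "space (qmeas S \<sigma> v) = S"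
  unfolding qmeas_def using sigma_algebra.sets_measure_of_eq[OF borelS_sa]
  by (metis sets.sets_into_space space_measure_of_conv)

lemma qmeas_emeasure:
  assumes mm: "matrix_measure S \<sigma>" and sp: "semipos_measure S \<sigma>" and F: "F \<in> borelS S"
  shows "emeasure (qmeas S \<sigma> v) F = ennreal (v \<bullet> (\<sigma> F *v v))"
  unfolding qmeas_def
proof (rule emeasure_measure_of_sigma[OF borelS_sa _ _ F])
  show "positive (borelS S) (\<lambda>E. ennreal (v \<bullet> (\<sigma> E *v v)))"
    unfolding positive_def using mm_empty[OF mm] by simp
  show "countably_additive (borelS S) (\<lambda>E. ennreal (v \<bullet> (\<sigma> E *v v)))"
    unfolding countably_additive_def
  proof (intro allI impI)
    fix A :: "nat \<Rightarrow> pt set"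
    assume r: "range A \<subseteq> borelS S" and d: "disjoint_family A"
    have "(\<lambda>n. \<sigma> (A n)) sums \<sigma> (\<Union>n. A n)" using mm r d unfolding matrix_measure_def by blast
    then have s: "(\<lambda>n. v \<bullet> (\<sigma> (A n) *v v)) sums (v \<bullet> (\<sigma> (\<Union>n. A n) *v v))"
      by (rule bounded_linear.sums[OF blin_qf])
    have nn: "\<And>n. 0 \<le> v \<bullet> (\<sigma> (A n) *v v)" using sp r unfolding semipos_measure_def by blast
    show "(\<Sum>n. ennreal (v \<bullet> (\<sigma> (A n) *v v))) = ennreal (v \<bullet> (\<sigma> (\<Union>n. A n) *v v))"
      using suminf_ennreal2[OF nn sums_summable[OF s]] sums_unique[OF s] by simp
  qed
qed

lemma qmeas_finite:
  assumes mm: "matrix_measure S \<sigma>" and sp: "semipos_measure S \<sigma>"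
  shows "finite_measure (qmeas S \<sigma> v)"
proof (rule finite_measureI)
  have "S \<in> borelS S" using borelS_sa sigma_algebra.sigma_sets_eq sigma_sets_top by metis
  then show "emeasure (qmeas S \<sigma> v) (space (qmeas S \<sigma> v)) \<noteq> \<infinity>"
    by (simp add: qmeas_space qmeas_emeasure[OF mm sp])
qed

lemma qmeas_measure:
  assumes mm: "matrix_measure S \<sigma>" and sp: "semipos_measure S \<sigma>" and F: "F \<in> borelS S"
  shows "measure (qmeas S \<sigma> v) F = v \<bullet> (\<sigma> F *v v)"
  using qmeas_emeasure[OF assms] sp F unfolding measure_def semipos_measure_def by simp


lemma cells_sub:
  assumes sub: "\<forall>i\<in>{1,2,3}. psi i ` S \<subseteq> S" shows "set u \<subseteq> {1,2,3} \<Longrightarrow> psiw u ` S \<subseteq> S"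
proof (induction u)
  case Nil then show ?case by simp
next
  case (Cons i u)
  then have "psi i ` (psiw u ` S) \<subseteq> psi i ` S" by auto
  also have "\<dots> \<subseteq> S" using sub Cons.prems by auto
  finally show ?case by (simp add: image_comp)
qed

lemma cells_cover:
  assumes attr: "S = (\<Union>i\<in>{1,2,3}. psi i ` S)" shows "S \<subseteq> (\<Union>u\<in>W l. psiw u ` S)"
proof (induction l)
  case 0
  have "W 0 = {[]}" unfolding W_def by auto
  then show ?case by simp
next
  case (Suc l)
  show ?case
  proof
    fix x assume "x \<in> S"
    then obtain i y where i: "i \<in> {1,2,3}" and y: "y \<in> S" and x: "x = psi i y" using attr by blast
    from y Suc obtain u where u: "u \<in> W l" and yu: "y \<in> psiw u ` S" by blast
    have "i # u \<in> W (Suc l)" using i u unfolding W_def by auto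
    moreover have "x \<in> psiw (i#u) ` S" using x yu by auto
    ultimately show "x \<in> (\<Union>u\<in>W (Suc l). psiw u ` S)" by blast
  qed
qed

lemma cell_borel:
  assumes cpt: "compact S" and sub: "\<forall>i\<in>{1,2,3}. psi i ` S \<subseteq> S" and u: "set u \<subseteq> {1,2,3}"
  shows "psiw u ` S \<in> borelS S"
proof -
  have "compact (psiw u ` S)" using psiw_cont cpt by (rule compact_continuous_image)
  then have b: "psiw u ` S \<in> sets borel" by (simp add: borel_closed compact_imp_closed)
  have "S \<in> sets borel" using cpt by (simp add: borel_closed compact_imp_closed)
  then show ?thesis using b cells_sub[OF sub u] by (subst sets_restrict_space_iff) auto
qed

lemma overlap_null:
  assumes cpt: "compact S" and sub: "\<forall>i\<in>{1,2,3}. psi i ` S \<subseteq> S"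
    and cov: "S \<subseteq> (\<Union>u\<in>W l. psiw u ` S)"
    and mm: "matrix_measure S \<sigma>" and sp: "semipos_measure S \<sigma>"
    and sm: "(\<Sum>u\<in>W l. \<sigma> (psiw u ` S)) = \<sigma> S"
    and u: "u \<in> W l" and u': "u' \<in> W l" and ne: "u \<noteq> u'"
  shows "psiw u ` S \<inter> psiw u' ` S \<in> null_sets (qmeas S \<sigma> v)"
proof -
  define \<mu> where "\<mu> = qmeas S \<sigma> v"
  define C where "C w = psiw w ` S" for w
  interpret finite_measure \<mu> unfolding \<mu>_def by (rule qmeas_finite[OF mm sp])
  have Cb: "C w \<in> sets \<mu>" if "w \<in> W l" for w
    using that cell_borel[OF cpt sub] unfolding \<mu>_def C_def qmeas_sets W_def by auto
  have Sb: "S \<in> sets \<mu>" unfolding \<mu>_def qmeas_sets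
    using borelS_sa sigma_algebra.sigma_sets_eq sigma_sets_top by metis
  have m: "measure \<mu> (C w) = v \<bullet> (\<sigma> (C w) *v v)" if "w \<in> W l" for w
    using Cb[OF that] unfolding \<mu>_def C_def qmeas_sets by (rule qmeas_measure[OF mm sp])
  have mS: "measure \<mu> S = v \<bullet> (\<sigma> S *v v)"
    using Sb unfolding \<mu>_def qmeas_sets by (rule qmeas_measure[OF mm sp])
  have sum_m: "(\<Sum>w\<in>W l. measure \<mu> (C w)) = measure \<mu> S"
  proof -
    have "(\<Sum>w\<in>W l. measure \<mu> (C w)) = (\<Sum>w\<in>W l. v \<bullet> (\<sigma> (C w) *v v))"
      using m by simp
    also have "\<dots> = v \<bullet> ((\<Sum>w\<in>W l. \<sigma> (C w)) *v v)"
      by (rule linear_sum[OF lin_qf, symmetric])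
    also have "\<dots> = measure \<mu> S" using sm mS unfolding C_def by simp
    finally show ?thesis .
  qed
  define R where "R = W l - {u, u'}"
  have fR: "finite R" unfolding R_def using W_finite by simp
  have RS: "C ` R \<subseteq> sets \<mu>" using Cb unfolding R_def by auto
  have "S \<subseteq> (C u \<union> C u') \<union> (\<Union>w\<in>R. C w)" using cov unfolding R_def C_def by blast
  then have "measure \<mu> S \<le> measure \<mu> ((C u \<union> C u') \<union> (\<Union>w\<in>R. C w))"
    using Cb u u' RS fR by (intro finite_measure_mono) auto
  also have "\<dots> \<le> measure \<mu> (C u \<union> C u') + measure \<mu> (\<Union>w\<in>R. C w)"
  proof -
    have "measure \<mu> ((C u \<union> C u') \<union> (\<Union>w\<in>R. C w)) = measure \<mu> (C u \<union> C u') + measure \<mu> ((\<Union>w\<in>R. C w) - (C u \<union> C u'))"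
      using Cb u u' RS fR by (intro finite_measure_Union') auto
    also have "measure \<mu> ((\<Union>w\<in>R. C w) - (C u \<union> C u')) \<le> measure \<mu> (\<Union>w\<in>R. C w)"
      using RS fR by (intro finite_measure_mono) auto
    finally show ?thesis by simp
  qed
  also have "measure \<mu> (\<Union>w\<in>R. C w) \<le> (\<Sum>w\<in>R. measure \<mu> (C w))"
    using fR RS by (rule finite_measure_subadditive_finite)
  also have "measure \<mu> (C u \<union> C u') = measure \<mu> (C u) + measure \<mu> (C u') - measure \<mu> (C u \<inter> C u')"
    using Cb u u' by (intro measure_Un3) (auto simp: fmeasurable_eq_sets)
  also have "measure \<mu> S = measure \<mu> (C u) + measure \<mu> (C u') + (\<Sum>w\<in>R. measure \<mu> (C w))"
  proof -
    have "(\<Sum>w\<in>W l. measure \<mu> (C w)) = measure \<mu> (C u) + (\<Sum>w\<in>W l - {u}. measure \<mu> (C w))"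
      using W_finite u by (rule sum.remove)
    also have "(\<Sum>w\<in>W l - {u}. measure \<mu> (C w)) = measure \<mu> (C u') + (\<Sum>w\<in>W l - {u} - {u'}. measure \<mu> (C w))"
      using W_finite u' ne by (intro sum.remove) auto
    finally show ?thesis using sum_m unfolding R_def by (simp add: Diff_insert2[symmetric] insert_commute)
  qed
  finally have "measure \<mu> (C u \<inter> C u') \<le> 0" by simp
  then have "measure \<mu> (C u \<inter> C u') = 0" using measure_nonneg[of \<mu>] by (simp add: order_antisym)
  moreover have "C u \<inter> C u' \<in> sets \<mu>" using Cb u u' by auto
  ultimately show ?thesis unfolding \<mu>_def[symmetric] C_def[symmetric]
    by (simp add: null_sets_def emeasure_eq_measure)
qed


lemma pow35_small: "y > 0 \<Longrightarrow> \<exists>l. (3/5::real)^l < y"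
proof -
  assume "y > 0"
  have "(\<lambda>n. (3/5::real)^n) \<longlonglongrightarrow> 0" by (rule LIMSEQ_power_zero) simp
  then have "eventually (\<lambda>n. (3/5::real)^n < y) sequentially" using \<open>y > 0\<close> by (rule order_tendstoD(2))
  then show ?thesis by (auto simp: eventually_sequentially)
qed

lemma small_cell:
  assumes cpt: "compact S" and attr: "S = (\<Union>i\<in>{1,2,3}. psi i ` S)"
    and x: "x \<in> S" and e: "e > 0"
  shows "\<exists>u. set u \<subseteq> {1,2,3} \<and> x \<in> psiw u ` S \<and> psiw u ` S \<subseteq> ball x e"
proof -
  obtain d where d: "\<forall>a\<in>S. \<forall>b\<in>S. dist a b \<le> d"
    using compact_imp_bounded[OF cpt] bounded_two_points by blast
  have "e / (\<bar>d\<bar> + 1) > 0" using e by (simp add: add_pos_nonneg)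
  then obtain l where l: "(3/5::real)^l < e / (\<bar>d\<bar> + 1)" using pow35_small by blast
  have le: "(3/5::real)^l * d < e"
  proof -
    have "(3/5::real)^l * d \<le> (3/5)^l * (\<bar>d\<bar> + 1)" by (intro mult_left_mono) auto
    also have "\<dots> < e" using l by (simp add: pos_less_divide_eq add_pos_nonneg)
    finally show ?thesis .
  qed
  obtain u where u: "u \<in> W l" and xu: "x \<in> psiw u ` S" using cells_cover[OF attr, of l] x by blast
  have "psiw u ` S \<subseteq> ball x e"
  proof
    fix z assume "z \<in> psiw u ` S"
    then obtain z' where z': "z' \<in> S" "z = psiw u z'" by blast
    obtain x' where x': "x' \<in> S" "x = psiw u x'" using xu by blast
    have "dist x z = norm (Dpsiw u *v (x' - z'))" using psiw_diff[of u x' z'] x' z' by (simp add: dist_norm)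
    also have "\<dots> \<le> (3/5)^length u * norm (x' - z')" by (rule Dpsiw_norm)
    also have "\<dots> \<le> (3/5)^l * d" using u d x' z' by (auto simp: W_def dist_norm intro!: mult_left_mono)
    also have "\<dots> < e" by (rule le)
    finally show "z \<in> ball x e" by simp
  qed
  then show ?thesis using u xu unfolding W_def by blast
qed

lemma gen_eq:
  assumes cpt: "compact S" and attr: "S = (\<Union>i\<in>{1,2,3}. psi i ` S)"
    and Nb: "N \<in> borelS S"
    and G: "G = {psiw u ` S - N | u. set u \<subseteq> {1,2,3}} \<union> {B \<in> borelS S. B \<subseteq> N}"
  shows "sigma_sets S G = borelS S"
proof -
  have sub: "\<forall>i\<in>{1,2,3}. psi i ` S \<subseteq> S" using attr by blast
  have cb: "psiw u ` S \<in> borelS S" if "set u \<subseteq> {1,2,3}" for u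
    using cell_borel[OF cpt sub that] .
  have Gb: "G \<subseteq> borelS S"
  proof
    fix X assume "X \<in> G"
    then show "X \<in> borelS S" unfolding G using cb Nb by auto
  qed
  have GP: "G \<subseteq> Pow S" using Gb sets.sets_into_space[of _ "restrict_space borel S"] by (auto simp: space_restrict_space)
  interpret SG: sigma_algebra S "sigma_sets S G" using GP by (rule sigma_algebra_sigma_sets)
  have "sigma_sets S G \<subseteq> sigma_sets S (borelS S)" using Gb by (rule sigma_sets_subseteq)
  also have "\<dots> = borelS S" using borelS_sa by (rule sigma_algebra.sigma_sets_eq)
  finally have le: "sigma_sets S G \<subseteq> borelS S" .
  have cG: "psiw u ` S \<in> sigma_sets S G" if u: "set u \<subseteq> {1,2,3}" for u
  proof -
    have "psiw u ` S - N \<in> sigma_sets S G" using u unfolding G by (intro sigma_sets.Basic) blast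
    moreover have "psiw u ` S \<inter> N \<in> sigma_sets S G"
      using u cb Nb unfolding G by (intro sigma_sets.Basic) auto
    ultimately have "(psiw u ` S - N) \<union> (psiw u ` S \<inter> N) \<in> sigma_sets S G" by blast
    then show ?thesis by (simp add: Un_Diff_Int)
  qed
  have opG: "S \<inter> U \<in> sigma_sets S G" if "open U" for U
  proof -
    define X where "X = {u. set u \<subseteq> {1,2,3::nat} \<and> psiw u ` S \<subseteq> U}"
    have "S \<inter> U = (\<Union>u\<in>X. psiw u ` S)"
    proof
      show "S \<inter> U \<subseteq> (\<Union>u\<in>X. psiw u ` S)"
      proof
        fix x assume x: "x \<in> S \<inter> U"
        then obtain e where e: "e > 0" "ball x e \<subseteq> U" using \<open>open U\<close> open_contains_ball by blast
        then obtain u where "set u \<subseteq> {1,2,3}" "x \<in> psiw u ` S" "psiw u ` S \<subseteq> ball x e"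
          using small_cell[OF cpt attr _ e(1)] x by blast
        then show "x \<in> (\<Union>u\<in>X. psiw u ` S)" unfolding X_def using e by blast
      qed
      show "(\<Union>u\<in>X. psiw u ` S) \<subseteq> S \<inter> U" unfolding X_def using cells_sub[OF sub] by blast
    qed
    also have "\<dots> \<in> sigma_sets S G" using cG unfolding X_def by (intro SG.countable_UN) auto
    finally show ?thesis .
  qed
  have ge: "borelS S \<subseteq> sigma_sets S G"
  proof
    fix F assume "F \<in> borelS S"
    then obtain B where B: "B \<in> sets borel" "F = S \<inter> B" unfolding sets_restrict_space by blast
    have Sb: "S \<in> sigma_sets UNIV (Collect open)" using cpt sets_borel
      by (metis borel_closed compact_imp_closed)
    have "F \<in> (\<inter>) S ` sigma_sets UNIV (Collect open)" using B sets_borel by auto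
    also have "\<dots> = sigma_sets S ((\<inter>) S ` Collect open)" using Sb by (rule sigma_sets_Int) simp
    also have "\<dots> \<subseteq> sigma_sets S (sigma_sets S G)" using opG by (intro sigma_sets_subseteq) auto
    also have "\<dots> = sigma_sets S G" using GP by (rule sigma_sets_sigma_sets_eq)
    finally show "F \<in> sigma_sets S G" .
  qed
  show ?thesis using le ge by blast
qed


lemma uniq_qf:
  assumes cpt: "compact S" and attr: "S = (\<Union>i\<in>{1,2,3}. psi i ` S)"
    and mm1: "matrix_measure S \<sigma>1" and sp1: "semipos_measure S \<sigma>1"
    and mm2: "matrix_measure S \<sigma>2" and sp2: "semipos_measure S \<sigma>2"
    and cells: "\<forall>u. set u \<subseteq> {1,2,3} \<longrightarrow> \<sigma>1 (psiw u ` S) = \<sigma>2 (psiw u ` S)"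
    and sm: "\<forall>l. (\<Sum>u\<in>W l. \<sigma>1 (psiw u ` S)) = \<sigma>1 S"
    and F: "F \<in> borelS S"
  shows "v \<bullet> (\<sigma>1 F *v v) = v \<bullet> (\<sigma>2 F *v v)"
proof -
  have sub: "\<forall>i\<in>{1,2,3}. psi i ` S \<subseteq> S" using attr by blast
  have S0: "psiw [] ` S = S" by simp
  have sm2: "(\<Sum>u\<in>W l. \<sigma>2 (psiw u ` S)) = \<sigma>2 S" for l
  proof -
    have "(\<Sum>u\<in>W l. \<sigma>2 (psiw u ` S)) = (\<Sum>u\<in>W l. \<sigma>1 (psiw u ` S))"
      using cells unfolding W_def by (intro sum.cong) auto
    also have "\<dots> = \<sigma>1 S" using sm by blast
    also have "\<dots> = \<sigma>2 S" using cells[rule_format, of "[]"] by simp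
    finally show ?thesis .
  qed
  define P where "P = {(p,i,j). set p \<subseteq> {1,2,3::nat} \<and> i \<in> {1,2,3::nat} \<and> j \<in> {1,2,3} \<and> i \<noteq> j}"
  define ov where "ov = (\<lambda>(p,i,j). psiw (p@[i]) ` S \<inter> psiw (p@[j]) ` S)"
  define N where "N = (\<Union>x\<in>P. ov x)"
  have cP: "countable P" by (rule countable_subset[OF subset_UNIV]) simp
  have Wp: "p@[i] \<in> W (Suc (length p))" if "set p \<subseteq> {1,2,3}" "i \<in> {1,2,3}" for p i
    using that unfolding W_def by auto
  have Nnull: "N \<in> null_sets (qmeas S \<sigma> v)"
    if mm: "matrix_measure S \<sigma>" and sp: "semipos_measure S \<sigma>"
      and smx: "\<And>l. (\<Sum>u\<in>W l. \<sigma> (psiw u ` S)) = \<sigma> S" for \<sigma>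
    unfolding N_def
  proof (rule null_sets_UN'[OF cP])
    fix x assume "x \<in> P"
    then obtain p i j where x: "x = (p,i,j)" "set p \<subseteq> {1,2,3}" "i \<in> {1,2,3}" "j \<in> {1,2,3}" "i \<noteq> j"
      unfolding P_def by blast
    show "ov x \<in> null_sets (qmeas S \<sigma> v)" unfolding ov_def x(1)
      using overlap_null[OF cpt sub cells_cover[OF attr] mm sp smx Wp[OF x(2,3)] Wp[OF x(2,4)]] x(5)
      by simp
  qed
  have N1: "N \<in> null_sets (qmeas S \<sigma>1 v)" using Nnull[OF mm1 sp1] sm by blast
  have N2: "N \<in> null_sets (qmeas S \<sigma>2 v)" using Nnull[OF mm2 sp2] sm2 by blast
  have Nb: "N \<in> borelS S" using N1 qmeas_sets by (metis null_setsD2)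
  have NS: "N \<subseteq> S" using Nb sets.sets_into_space[of _ "restrict_space borel S"] by (auto simp: space_restrict_space)
  define G where "G = {psiw u ` S - N | u. set u \<subseteq> {1,2,3}} \<union> {B \<in> borelS S. B \<subseteq> N}"
  have cb: "psiw u ` S \<in> borelS S" if "set u \<subseteq> {1,2,3}" for u
    using cell_borel[OF cpt sub that] .
  have Gb: "G \<subseteq> borelS S" unfolding G_def using cb Nb by auto
  have GP: "G \<subseteq> Pow S" using Gb sets.sets_into_space[of _ "restrict_space borel S"] by (auto simp: space_restrict_space)
  have sG: "sigma_sets S G = borelS S" by (rule gen_eq[OF cpt attr Nb G_def])
  have Nin: "B \<in> G" if "B \<in> borelS S" "B \<subseteq> N" for B using that unfolding G_def by blast
  have pre: "psiw (u@r) ` S \<subseteq> psiw u ` S" if "set r \<subseteq> {1,2,3}" for u r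
    using cells_sub[OF sub that] by (auto simp: psiw_append image_comp[symmetric])
  have stable: "Int_stable G"
    unfolding Int_stable_def
  proof (intro ballI)
    fix X Y assume X: "X \<in> G" and Y: "Y \<in> G"
    show "X \<inter> Y \<in> G"
    proof (cases "X \<subseteq> N \<or> Y \<subseteq> N")
      case True
      then have "X \<inter> Y \<subseteq> N" by blast
      moreover have "X \<inter> Y \<in> borelS S" using X Y Gb by auto
      ultimately show ?thesis by (rule Nin[rotated])
    next
      case False
      then obtain u u' where u: "set u \<subseteq> {1,2,3}" "X = psiw u ` S - N"
        and u': "set u' \<subseteq> {1,2,3}" "Y = psiw u' ` S - N"
        using X Y unfolding G_def by blast
      have "prefix u u' \<or> prefix u' u \<or> u \<parallel> u'" unfolding parallel_def by blast
      then show ?thesis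
      proof (elim disjE)
        assume "prefix u u'"
        then obtain r where r: "u' = u @ r" by (auto simp: prefix_def)
        then have "X \<inter> Y = Y" using pre[of r u] u u' by auto
        then show ?thesis using Y by simp
      next
        assume "prefix u' u"
        then obtain r where r: "u = u' @ r" by (auto simp: prefix_def)
        then have "X \<inter> Y = X" using pre[of r u'] u u' by auto
        then show ?thesis using X by simp
      next
        assume "u \<parallel> u'"
        then obtain p i r j r' where d: "i \<noteq> j" "u = p @ i # r" "u' = p @ j # r'"
          using parallel_decomp by blast
        have "psiw u ` S \<subseteq> psiw (p@[i]) ` S" using pre[of r "p@[i]"] d u by auto
        moreover have "psiw u' ` S \<subseteq> psiw (p@[j]) ` S" using pre[of r' "p@[j]"] d u' by auto
        moreover have "(p,i,j) \<in> P" using d u u' unfolding P_def by auto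
        ultimately have "psiw u ` S \<inter> psiw u' ` S \<subseteq> ov (p,i,j)" "(p,i,j) \<in> P" unfolding ov_def by auto
        then have "psiw u ` S \<inter> psiw u' ` S \<subseteq> N" unfolding N_def by blast
        then have "X \<inter> Y = {}" using u u' by auto
        then show ?thesis using Nin[of "{}"] by simp
      qed
    qed
  qed
  have eqG: "emeasure (qmeas S \<sigma>1 v) X = emeasure (qmeas S \<sigma>2 v) X" if X: "X \<in> G" for X
  proof (cases "X \<subseteq> N")
    case True
    then have "X \<in> null_sets (qmeas S \<sigma>1 v)" "X \<in> null_sets (qmeas S \<sigma>2 v)"
      using X Gb N1 N2 null_sets_subset qmeas_sets by (metis subsetD)+
    then show ?thesis by (simp add: null_setsD1)
  next
    case False
    then obtain u where u: "set u \<subseteq> {1,2,3}" "X = psiw u ` S - N" using X unfolding G_def by blast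
    have "emeasure (qmeas S \<sigma>1 v) X = emeasure (qmeas S \<sigma>1 v) (psiw u ` S)"
      unfolding u(2) using N1 cb[OF u(1)] by (intro emeasure_Diff_null_set) (auto simp: qmeas_sets)
    also have "\<dots> = emeasure (qmeas S \<sigma>2 v) (psiw u ` S)"
      using qmeas_emeasure[OF mm1 sp1 cb[OF u(1)]] qmeas_emeasure[OF mm2 sp2 cb[OF u(1)]] cells u(1) by simp
    also have "\<dots> = emeasure (qmeas S \<sigma>2 v) X"
      unfolding u(2) using N2 cb[OF u(1)] by (intro emeasure_Diff_null_set[symmetric]) (auto simp: qmeas_sets)
    finally show ?thesis .
  qed
  have "qmeas S \<sigma>1 v = qmeas S \<sigma>2 v"
  proof (rule measure_eqI_generator_eq_countable[OF stable GP eqG])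
    show "sets (qmeas S \<sigma>1 v) = sigma_sets S G" "sets (qmeas S \<sigma>2 v) = sigma_sets S G"
      using sG qmeas_sets by auto
    have "S - N \<in> G" unfolding G_def by (rule UnI1, rule CollectI, rule exI[of _ "[]"]) simp
    then show "{S - N, N} \<subseteq> G" using Nin[OF Nb] by auto
    show "\<Union>{S - N, N} = S" using NS by auto
    show "countable {S - N, N}" by simp
    show "emeasure (qmeas S \<sigma>1 v) a \<noteq> \<infinity>" for a
      using finite_measure.emeasure_finite[OF qmeas_finite[OF mm1 sp1]] by simp
  qed
  then have "ennreal (v \<bullet> (\<sigma>1 F *v v)) = ennreal (v \<bullet> (\<sigma>2 F *v v))"
    using qmeas_emeasure[OF mm1 sp1 F, of v] qmeas_emeasure[OF mm2 sp2 F, of v] by metis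
  then show ?thesis using sp1 sp2 F unfolding semipos_measure_def by simp
qed


lemma qf_expand: "v \<bullet> ((M::real^2^2) *v v) = (M $ 1 $ 1)*((v $ 1))^2 + ((M $ 1 $ 2) + (M $ 2 $ 1))*((v $ 1)*(v $ 2)) + (M $ 2 $ 2)*((v $ 2))^2"
  by (simp add: inner_vec_def matrix_vector_mult_def sum_2 power2_eq_square algebra_simps)

lemma polar:
  assumes "symmetric_mat A" "symmetric_mat B" "\<forall>v. v \<bullet> ((A::real^2^2) *v v) = v \<bullet> (B *v v)"
  shows "A = B"
proof -
  have sA: "(A $ 1 $ 2) = (A $ 2 $ 1)"
  proof -
    have "(A $ 1 $ 2) = transpose A $ 1 $ 2" using assms(1) by (simp add: symmetric_mat_def)
    then show ?thesis by (simp add: transpose_def)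
  qed
  have sB: "(B $ 1 $ 2) = (B $ 2 $ 1)"
  proof -
    have "(B $ 1 $ 2) = transpose B $ 1 $ 2" using assms(2) by (simp add: symmetric_mat_def)
    then show ?thesis by (simp add: transpose_def)
  qed
  have q: "\<And>a b. (A $ 1 $ 1)*a^2 + ((A $ 1 $ 2) + (A $ 2 $ 1))*(a*b) + (A $ 2 $ 2)*b^2 = (B $ 1 $ 1)*a^2 + ((B $ 1 $ 2) + (B $ 2 $ 1))*(a*b) + (B $ 2 $ 2)*b^2"
  proof -
    fix a b :: real
    show "(A $ 1 $ 1)*a^2 + ((A $ 1 $ 2) + (A $ 2 $ 1))*(a*b) + (A $ 2 $ 2)*b^2 = (B $ 1 $ 1)*a^2 + ((B $ 1 $ 2) + (B $ 2 $ 1))*(a*b) + (B $ 2 $ 2)*b^2"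
      using assms(3)[rule_format, of "vector [a,b]"] unfolding qf_expand by simp
  qed
  have 1: "(A $ 1 $ 1) = (B $ 1 $ 1)" using q[of 1 0] by simp
  have 2: "(A $ 2 $ 2) = (B $ 2 $ 2)" using q[of 0 1] by simp
  have 3: "(A $ 1 $ 2) = (B $ 1 $ 2)" using q[of 1 1] 1 2 sA sB by simp
  show ?thesis unfolding vec_eq_iff forall_2 using 1 2 3 sA sB by simp
qed

lemma inner_transpose: "(x::real^2) \<bullet> ((A::real^2^2) *v y) = (transpose A *v x) \<bullet> y"
  by (simp add: inner_vec_def matrix_vector_mult_def sum_2 transpose_def algebra_simps)



lemma image_borelS:
  assumes cpt: "compact S" and sub: "\<forall>i\<in>{1,2,3}. psi i ` S \<subseteq> S" and u: "set u \<subseteq> {1,2,3}"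
    and F: "F \<in> borelS S"
  shows "psiw u ` F \<in> borelS S"
proof -
  obtain B where B: "B \<in> sets borel" "F = S \<inter> B" using F unfolding sets_restrict_space by blast
  have "psiw u ` F = psiw u ` S \<inter> psiw u ` B" unfolding B(2) using psiw_inj by (simp add: image_Int)
  also have "\<dots> = psiw u ` S \<inter> ginv u -` B" by (simp add: psiw_image_vimage)
  finally have eq: "psiw u ` F = psiw u ` S \<inter> ginv u -` B" .
  have c: "psiw u ` S \<in> borelS S" by (rule cell_borel[OF cpt sub u])
  have Sb: "S \<in> sets borel" using cpt by (simp add: borel_closed compact_imp_closed)
  have "psiw u ` S \<in> sets borel" "psiw u ` S \<subseteq> S" using c Sb by (auto simp: sets_restrict_space_iff)
  moreover have "ginv u -` B \<in> sets borel" using ginv_meas B(1) by (rule measurable_sets_borel)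
  ultimately show ?thesis unfolding eq using Sb by (subst sets_restrict_space_iff) auto
qed


lemma mm_image:
  assumes cpt: "compact S" and sub: "\<forall>i\<in>{1,2,3}. psi i ` S \<subseteq> S" and u: "set u \<subseteq> {1,2,3}"
    and mm: "matrix_measure S \<tau>" and sp: "semipos_measure S \<tau>"
  shows "matrix_measure S (\<lambda>F. \<tau> (psiw u ` F))" "semipos_measure S (\<lambda>F. \<tau> (psiw u ` F))"
proof -
  have ib: "\<And>F. F \<in> borelS S \<Longrightarrow> psiw u ` F \<in> borelS S" by (rule image_borelS[OF cpt sub u])
  show "semipos_measure S (\<lambda>F. \<tau> (psiw u ` F))" using sp ib unfolding semipos_measure_def by blast
  show "matrix_measure S (\<lambda>F. \<tau> (psiw u ` F))" unfolding matrix_measure_def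
  proof (intro conjI ballI allI impI)
    fix E assume "E \<in> borelS S" then show "symmetric_mat (\<tau> (psiw u ` E))"
      using mm ib unfolding matrix_measure_def by blast
  next
    fix A :: "nat \<Rightarrow> pt set" assume r: "range A \<subseteq> borelS S" and d: "disjoint_family A"
    have r': "range (\<lambda>n. psiw u ` A n) \<subseteq> borelS S" using r ib by auto
    have d': "disjoint_family (\<lambda>n. psiw u ` A n)" using d psiw_inj[of u]
      unfolding disjoint_family_on_def by (auto simp: image_Int[symmetric])
    have "(\<lambda>n. \<tau> (psiw u ` A n)) sums \<tau> (\<Union>n. psiw u ` A n)"
      using mm r' d' unfolding matrix_measure_def by blast
    then show "(\<lambda>n. \<tau> (psiw u ` A n)) sums \<tau> (psiw u ` (\<Union>n. A n))" by (simp add: image_UN)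
  qed
qed

lemma mm_sand:
  assumes mm: "matrix_measure S \<tau>" and sp: "semipos_measure S \<tau>" and k: "k \<ge> 0"
  shows "matrix_measure S (\<lambda>F. k *\<^sub>R (D ** \<tau> F ** transpose D))"
        "semipos_measure S (\<lambda>F. k *\<^sub>R (D ** \<tau> F ** transpose D))"
proof -
  show "semipos_measure S (\<lambda>F. k *\<^sub>R (D ** \<tau> F ** transpose D))"
    unfolding semipos_measure_def
  proof (intro ballI allI)
    fix E v assume E: "E \<in> borelS S"
    have "v \<bullet> ((k *\<^sub>R (D ** \<tau> E ** transpose D)) *v v)
        = k * ((transpose D *v v) \<bullet> (\<tau> E *v (transpose D *v v)))"
      by (simp add: scaleR_matrix_vector_assoc[symmetric] matrix_vector_mul_assoc[symmetric] inner_transpose)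
    also have "\<dots> \<ge> 0" using sp E k unfolding semipos_measure_def by simp
    finally show "0 \<le> v \<bullet> ((k *\<^sub>R (D ** \<tau> E ** transpose D)) *v v)" .
  qed
  show "matrix_measure S (\<lambda>F. k *\<^sub>R (D ** \<tau> F ** transpose D))" unfolding matrix_measure_def
  proof (intro conjI ballI allI impI)
    fix E assume "E \<in> borelS S" then have "transpose (\<tau> E) = \<tau> E"
      using mm unfolding matrix_measure_def symmetric_mat_def by blast
    then show "symmetric_mat (k *\<^sub>R (D ** \<tau> E ** transpose D))"
      unfolding symmetric_mat_def by (simp add: transpose_scalar matrix_transpose_mul matrix_mul_assoc)
  next
    fix A :: "nat \<Rightarrow> pt set" assume r: "range A \<subseteq> borelS S" and d: "disjoint_family A"
    have "(\<lambda>n. \<tau> (A n)) sums \<tau> (\<Union>n. A n)" using mm r d unfolding matrix_measure_def by blast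
    then have "(\<lambda>n. D ** \<tau> (A n) ** transpose D) sums (D ** \<tau> (\<Union>n. A n) ** transpose D)"
      by (rule bounded_linear.sums[OF blin_sand])
    then show "(\<lambda>n. k *\<^sub>R (D ** \<tau> (A n) ** transpose D)) sums (k *\<^sub>R (D ** \<tau> (\<Union>n. A n) ** transpose D))"
      by (rule bounded_linear.sums[OF bounded_linear_scaleR_right])
  qed
qed

theorem lemma2p2:
  fixes S :: "(real^2) set" and \<tau> :: "(real^2) set \<Rightarrow> real^2^2" and \<beta> :: real
    and js :: "nat list"
  assumes S_compact: "compact S" and S_ne: "S \<noteq> {}"
    and S_attr: "S = (\<Union>i\<in>{1,2,3}. psi i ` S)"
    and beta_pos: "\<beta> > 0"
    and beta_eig: "\<forall>x\<in>S. Lop (\<lambda>_. mat 1) x = \<beta> *\<^sub>R mat 1"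
    and tau_meas: "matrix_measure S \<tau>"
    and tau_semipos: "semipos_measure S \<tau>"
    and tau_norm: "trace (\<tau> S) = 1"
    and tau_eig: "\<forall>A. continuous_on S A \<longrightarrow> (\<forall>x\<in>S. symmetric_mat (A x)) \<longrightarrow>
                     HSint S \<tau> (Lop A) = \<beta> * HSint S \<tau> A"
    and tau_S_id: "\<exists>c>0. \<tau> S = c *\<^sub>R mat 1"
    and tau_gibbs: "\<forall>ws. set ws \<subseteq> {1,2,3} \<longrightarrow>
                     \<tau> (psiw ws ` S) = (1 / \<beta>) ^ length ws *\<^sub>R
                        (Dpsiw ws ** \<tau> S ** transpose (Dpsiw ws))"
    and js_len: "length js \<ge> 1" and js_set: "set js \<subseteq> {1,2,3}"
  shows "\<forall>E\<in>sets borel.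
           \<tau> (psiw js -` E \<inter> S) =
             \<beta> ^ length js *\<^sub>R (matrix_inv (Dpsiw js) ** \<tau> (E \<inter> psiw js ` S)
                                  ** transpose (matrix_inv (Dpsiw js)))"
proof (intro ballI)
  fix E :: "pt set" assume E: "E \<in> sets borel"
  have sub: "\<forall>i\<in>{1,2,3}. psi i ` S \<subseteq> S" using S_attr by blast
  obtain x0 where x0: "x0 \<in> S" using S_ne by blast
  have TT: "(\<Sum>i\<in>{1,2,3::nat}. Tm i ** Tm i) = \<beta> *\<^sub>R mat 1"
    using beta_eig[rule_format, OF x0] unfolding Lop_def by (simp add: Tm_sym)
  obtain c where c: "c > 0" "\<tau> S = c *\<^sub>R mat 1" using tau_S_id by blast
  have bne: "\<beta> \<noteq> 0" using beta_pos by simp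
  define n where "n = length js"
  define D where "D = Dpsiw js"
  define \<sigma>1 where "\<sigma>1 = (\<lambda>F. \<tau> (psiw js ` F))"
  define \<sigma>2 where "\<sigma>2 = (\<lambda>F. (1/\<beta>)^n *\<^sub>R (D ** \<tau> F ** transpose D))"
  have mm1: "matrix_measure S \<sigma>1" "semipos_measure S \<sigma>1"
    unfolding \<sigma>1_def using mm_image[OF S_compact sub js_set tau_meas tau_semipos] by auto
  have mm2: "matrix_measure S \<sigma>2" "semipos_measure S \<sigma>2"
    unfolding \<sigma>2_def using mm_sand[OF tau_meas tau_semipos, of "(1/\<beta>)^n" D] beta_pos by auto
  have cellsx: "\<sigma>1 (psiw u ` S) = \<sigma>2 (psiw u ` S)" if u: "set u \<subseteq> {1,2,3}" for u
  proof -
    have "\<sigma>1 (psiw u ` S) = \<tau> (psiw (js @ u) ` S)" unfolding \<sigma>1_def by (simp add: psiw_append image_comp)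
    also have "\<dots> = (1 / \<beta>) ^ length (js@u) *\<^sub>R (Dpsiw (js@u) ** \<tau> S ** transpose (Dpsiw (js@u)))"
      using tau_gibbs js_set u by simp
    also have "\<dots> = (1/\<beta>)^n *\<^sub>R (D ** ((1 / \<beta>) ^ length u *\<^sub>R (Dpsiw u ** \<tau> S ** transpose (Dpsiw u))) ** transpose D)"
      unfolding n_def D_def Dpsiw_append
      by (simp add: power_add matrix_transpose_mul matrix_mul_assoc matrix_scalar_ac scalar_matrix_assoc)
    also have "\<dots> = \<sigma>2 (psiw u ` S)" unfolding \<sigma>2_def using tau_gibbs u by simp
    finally show ?thesis .
  qed
  have smtau: "(\<Sum>u\<in>W l. \<tau> (psiw u ` S)) = \<tau> S" for l
  proof -
    have "(\<Sum>u\<in>W l. \<tau> (psiw u ` S)) = (\<Sum>u\<in>W l. ((1/\<beta>)^l * c) *\<^sub>R (Dpsiw u ** transpose (Dpsiw u)))"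
      using tau_gibbs c(2) unfolding W_def
      by (intro sum.cong) (auto simp: matrix_scalar_ac scalar_matrix_assoc)
    also have "\<dots> = ((1/\<beta>)^l * c) *\<^sub>R (\<beta>^l *\<^sub>R mat 1)"
      by (simp add: scaleR_sum_right[symmetric] DD_sum[OF TT])
    also have "\<dots> = \<tau> S" using c(2) bne by (simp add: power_one_over field_simps)
    finally show ?thesis .
  qed
  have sm1: "(\<Sum>u\<in>W l. \<sigma>1 (psiw u ` S)) = \<sigma>1 S" for l
  proof -
    have "(\<Sum>u\<in>W l. \<sigma>1 (psiw u ` S)) = (\<Sum>u\<in>W l. \<sigma>2 (psiw u ` S))"
      using cellsx unfolding W_def by (intro sum.cong) auto
    also have "\<dots> = (1/\<beta>)^n *\<^sub>R (D ** (\<Sum>u\<in>W l. \<tau> (psiw u ` S)) ** transpose D)"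
      unfolding \<sigma>2_def by (simp add: scaleR_sum_right[symmetric] linear_sum[OF lin_sand])
    also have "\<dots> = \<sigma>2 S" unfolding smtau \<sigma>2_def ..
    also have "\<dots> = \<sigma>1 S" using cellsx[of "[]"] by simp
    finally show ?thesis .
  qed
  have eq12: "\<sigma>1 F = \<sigma>2 F" if F: "F \<in> borelS S" for F
  proof (rule polar)
    show "symmetric_mat (\<sigma>1 F)" "symmetric_mat (\<sigma>2 F)"
      using mm1(1) mm2(1) F unfolding matrix_measure_def by blast+
    show "\<forall>v. v \<bullet> (\<sigma>1 F *v v) = v \<bullet> (\<sigma>2 F *v v)"
      using uniq_qf[OF S_compact S_attr mm1 mm2 _ _ F] cellsx sm1 by blast
  qed
  define F where "F = psiw js -` E \<inter> S"
  have Fb: "F \<in> borelS S"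
  proof -
    have "psiw js \<in> borel_measurable borel" by (intro borel_measurable_continuous_onI psiw_cont)
    then have "psiw js -` E \<in> sets borel" using E by (rule measurable_sets_borel)
    then show ?thesis unfolding F_def sets_restrict_space by blast
  qed
  have imF: "psiw js ` F = E \<inter> psiw js ` S" unfolding F_def by auto
  have key: "\<tau> (E \<inter> psiw js ` S) = (1/\<beta>)^n *\<^sub>R (D ** \<tau> F ** transpose D)"
    using eq12[OF Fb] unfolding \<sigma>1_def \<sigma>2_def imF .
  have inv: "matrix_inv D ** D = mat 1" unfolding D_def using Dpsiw_inv by (rule matrix_inv_both(2))
  have invT: "transpose D ** transpose (matrix_inv D) = mat 1"
    using inv by (metis matrix_transpose_mul transpose_mat)
  have "\<beta> ^ n *\<^sub>R (matrix_inv D ** \<tau> (E \<inter> psiw js ` S) ** transpose (matrix_inv D))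
      = (\<beta> ^ n * (1/\<beta>)^n) *\<^sub>R ((matrix_inv D ** D) ** \<tau> F ** (transpose D ** transpose (matrix_inv D)))"
    unfolding key by (simp add: matrix_scalar_ac scalar_matrix_assoc matrix_mul_assoc)
  also have "\<dots> = \<tau> F" unfolding inv invT using bne by (simp add: power_one_over)
  finally show "\<tau> (psiw js -` E \<inter> S) = \<beta> ^ length js *\<^sub>R (matrix_inv (Dpsiw js) ** \<tau> (E \<inter> psiw js ` S) ** transpose (matrix_inv (Dpsiw js)))"
    unfolding F_def n_def D_def by simp
qed

end
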